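(* Let $N\ge0$ be an integer, let $\vec\beta$ be admissible, and let $\ell<0$. Then the numbers $p_0(\ell),\dots,p_N(\ell)$ defined in the context satisfy $0\le p_k(\ell)\le1$ for every $k$ and $\sum_{k=0}^Np_k(\ell)=1$. Consequently they define a probability distribution on $\{0,\dots,N\}$.
   Context: Let $N\ge0$ be an integer. A vector $\vec\beta=(\beta_0,\dots,\beta_N)$ is admissible if $\beta_0\ge\beta_1\ge\cdots\ge\beta_N>0$ and $\sum_i\beta_i=1$. For such a vector put $\mu_i=\beta_{i+1}/\sum_{j=0}^i\beta_j$ for $0\le i\le N-1$. For $\ell<0$ define: - if $N=0$, $p_0(\ell)=1$; - if $N\ge1$, $p_N(\ell)=\exp\!\big(-\frac{(1-\beta_N)\ell^2}{2\beta_N}\big)$; - for $1\le k\le N-1$, $$p_k(\ell)=\Big(\prod_{m=k}^{N-1}\frac1{\mu_m}\Big)\sum_{j=k-1}^{N-1}e^{-\ell^2/(2\mu_j)}\prod_{\substack{m=k-1\\ m\ne j}}^{N-1}\frac1{1/\mu_m-1/\mu_j};$$ - $p_0(\ell)=1-\sum_{k=1}^Np_k(\ell)$. *)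

theory Defs
  imports Complex_Main
begin

text \<open>A vector beta = (beta_0,...,beta_N) is represented by a function nat => real;
only the values at indices 0..N matter.\<close>

definition admissible :: "nat \<Rightarrow> (nat \<Rightarrow> real) \<Rightarrow> bool" where
  "admissible N \<beta> \<longleftrightarrow> (\<forall>i<N. \<beta> (Suc i) \<le> \<beta> i) \<and> \<beta> N > 0 \<and> (\<Sum>i=0..N. \<beta> i) = 1"

definition mu :: "(nat \<Rightarrow> real) \<Rightarrow> nat \<Rightarrow> real" where
  "mu \<beta> i = \<beta> (Suc i) / (\<Sum>j=0..i. \<beta> j)"

definition p_mid :: "nat \<Rightarrow> (nat \<Rightarrow> real) \<Rightarrow> nat \<Rightarrow> real \<Rightarrow> real" where
  "p_mid N \<beta> k l =
     (\<Prod>m=k..N-1. 1 / mu \<beta> m) *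
     (\<Sum>j=k-1..N-1. exp (- l\<^sup>2 / (2 * mu \<beta> j)) *
        (\<Prod>m\<in>{k-1..N-1} - {j}. 1 / (1 / mu \<beta> m - 1 / mu \<beta> j)))"

definition p_top :: "nat \<Rightarrow> (nat \<Rightarrow> real) \<Rightarrow> real \<Rightarrow> real" where
  "p_top N \<beta> l = exp (- ((1 - \<beta> N) * l\<^sup>2) / (2 * \<beta> N))"

definition p :: "nat \<Rightarrow> (nat \<Rightarrow> real) \<Rightarrow> nat \<Rightarrow> real \<Rightarrow> real" where
  "p N \<beta> k l =
     (if N = 0 then (if k = 0 then 1 else 0)
      else if k = N then p_top N \<beta> l
      else if 1 \<le> k \<and> k < N then p_mid N \<beta> k l
      else if k = 0 then 1 - (\<Sum>i=1..N-1. p_mid N \<beta> i l) - p_top N \<beta> l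
      else 0)"

end

theory Submission imports Defs begin

definition w :: "(nat \<Rightarrow> real) \<Rightarrow> nat set \<Rightarrow> nat \<Rightarrow> real" where
  "w a A j = (\<Prod>m\<in>A-{j}. 1 / (a m - a j))"
definition FF :: "(nat \<Rightarrow> real) \<Rightarrow> nat set \<Rightarrow> real \<Rightarrow> real" where
  "FF a A x = (\<Sum>j\<in>A. exp (- x * a j) * w a A j)"
definition EE :: "(nat \<Rightarrow> real) \<Rightarrow> nat set \<Rightarrow> real \<Rightarrow> real" where
  "EE a A x = (\<Sum>j\<in>A. exp (- x * a j) * (\<Prod>m\<in>A-{j}. a m) * w a A j)"

lemma w_ins_old:
  assumes "finite A" "b \<notin> A" "j \<in> A"
  shows "w a (insert b A) j = w a A j / (a b - a j)"
proof -
  have "insert b A - {j} = insert b (A - {j})" using assms by auto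
  thus ?thesis using assms by (simp add: w_def)
qed

lemma w_ins_new:
  assumes "finite A" "b \<notin> A"
  shows "w a (insert b A) b = (\<Prod>m\<in>A. 1 / (a m - a b))"
proof -
  have "insert b A - {b} = A" using assms by auto
  thus ?thesis by (simp add: w_def)
qed

lemma prod_ins_old:
  assumes "finite A" "b \<notin> A" "j \<in> A"
  shows "(\<Prod>m\<in>insert b A-{j}. a m) = a b * (\<Prod>m\<in>A-{j}. a m)"
proof -
  have "insert b A - {j} = insert b (A - {j})" using assms by auto
  thus ?thesis using assms by simp
qed

lemma PF:
  assumes "finite A" "A \<noteq> {}"
  shows "inj_on a A \<Longrightarrow> c \<notin> a ` A \<Longrightarrow>
    (\<Sum>j\<in>A. 1 / (a j - c) * w a A j) = 1 / (\<Prod>m\<in>A. (a m - c))"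
  using assms
proof (induction A arbitrary: c rule: finite_ne_induct)
  case (singleton x)
  then show ?case by (simp add: w_def)
next
  case (insert b A)
  have ab: "a b \<notin> a ` A" using insert by auto
  have cb: "c \<noteq> a b" using insert by auto
  have IHc: "(\<Sum>j\<in>A. 1 / (a j - c) * w a A j) = 1 / (\<Prod>m\<in>A. (a m - c))"
    using insert by auto
  have IHb: "(\<Sum>j\<in>A. 1 / (a j - a b) * w a A j) = 1 / (\<Prod>m\<in>A. (a m - a b))"
    using insert ab by auto
  have "(\<Sum>j\<in>insert b A. 1 / (a j - c) * w a (insert b A) j)
     = (\<Sum>j\<in>A. 1 / (a j - c) * (w a A j / (a b - a j))) + 1/(a b - c) * (\<Prod>m\<in>A. 1 / (a m - a b))"
    using insert by (simp add: w_ins_old w_ins_new mult.commute)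
  also have "(\<Sum>j\<in>A. 1 / (a j - c) * (w a A j / (a b - a j)))
     = (\<Sum>j\<in>A. (1 / (a j - c) * w a A j - 1 / (a j - a b) * w a A j) / (a b - c))"
  proof (rule sum.cong)
    fix j assume j: "j \<in> A"
    have "a j \<noteq> c" using j insert by auto
    moreover have "a j \<noteq> a b" using j ab by (metis image_eqI)
    ultimately
    show "1 / (a j - c) * (w a A j / (a b - a j)) = (1 / (a j - c) * w a A j - 1 / (a j - a b) * w a A j) / (a b - c)"
      using cb apply (simp add: divide_simps) by (simp add: algebra_simps)
  qed simp
  also have "\<dots> = ((\<Sum>j\<in>A. 1 / (a j - c) * w a A j) - (\<Sum>j\<in>A. 1 / (a j - a b) * w a A j)) / (a b - c)"
    by (simp only: sum_divide_distrib[symmetric] sum_subtractf)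
  finally have "(\<Sum>j\<in>insert b A. 1 / (a j - c) * w a (insert b A) j)
     = (1 / (\<Prod>m\<in>A. (a m - c)) - 1 / (\<Prod>m\<in>A. (a m - a b))) / (a b - c) + 1/(a b - c) * (\<Prod>m\<in>A. 1 / (a m - a b))"
    using IHc IHb by simp
  also have "\<dots> = 1 / (\<Prod>m\<in>A. (a m - c)) / (a b - c)"
    by (simp add: prod_dividef diff_divide_distrib)
  also have "\<dots> = 1 / (\<Prod>m\<in>insert b A. (a m - c))" using insert by simp
  finally show ?case .
qed

lemma neg_div_aux: "ww / (ab - ax) = - (1 / (ax - ab) * (ww::real))"
  by (metis divide_minus_right minus_diff_eq mult_1 times_divide_eq_left divide_divide_eq_left)

lemma w_sum_zero:
  assumes "finite A" "A \<noteq> {}" "b \<notin> A" "inj_on a (insert b A)"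
  shows "(\<Sum>j\<in>insert b A. w a (insert b A) j) = 0"
proof -
  have ab: "a b \<notin> a ` A" using assms by auto
  have "(\<Sum>j\<in>insert b A. w a (insert b A) j) = (\<Sum>j\<in>A. w a A j / (a b - a j)) + (\<Prod>m\<in>A. 1 / (a m - a b))"
    using assms by (simp add: w_ins_old w_ins_new)
  also have "(\<Sum>j\<in>A. w a A j / (a b - a j)) = - (\<Sum>j\<in>A. 1 / (a j - a b) * w a A j)"
    unfolding sum_negf[symmetric]
    by (rule sum.cong) (rule refl, rule neg_div_aux)
  also have "\<dots> = - (1 / (\<Prod>m\<in>A. (a m - a b)))" using PF[of A a "a b"] assms ab
    by (auto simp: inj_on_insert)
  finally show ?thesis by (simp add: prod_dividef)
qed

lemma FF_zero:
  assumes "finite A" "A \<noteq> {}" "b \<notin> A" "inj_on a (insert b A)"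
  shows "FF a (insert b A) 0 = 0"
  using w_sum_zero[OF assms] by (simp add: FF_def)

lemma G_eq:
  assumes "finite A" "b \<notin> A" "inj_on a (insert b A)"
  shows "exp (a b * t) * FF a (insert b A) t =
    (\<Sum>j\<in>A. exp ((a b - a j) * t) * (w a A j / (a b - a j))) + w a (insert b A) b"
proof -
  have expab: "\<And>j. exp (a b * t) * exp (- (t * a j)) = exp ((a b - a j) * t)"
  proof -
    fix j
    have "a b * t + - t * a j = (a b - a j) * t" by (simp add: algebra_simps)
    thus "exp (a b * t) * exp (- (t * a j)) = exp ((a b - a j) * t)" by (simp only: exp_add[symmetric] mult_minus_left)
  qed
  have "exp (a b * t) * FF a (insert b A) t =
     (\<Sum>j\<in>A. exp (a b * t) * (exp (- t * a j) * (w a A j / (a b - a j)))) + exp (a b * t) * (exp (- t * a b) * w a (insert b A) b)"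
    using assms by (simp add: FF_def w_ins_old sum_distrib_left distrib_left)
  also have "\<dots> = (\<Sum>j\<in>A. exp ((a b - a j) * t) * (w a A j / (a b - a j))) + w a (insert b A) b"
  proof -
    have "(\<Sum>j\<in>A. exp (a b * t) * (exp (- t * a j) * (w a A j / (a b - a j)))) = (\<Sum>j\<in>A. exp ((a b - a j) * t) * (w a A j / (a b - a j)))"
      by (rule sum.cong) (simp_all only: mult.assoc[symmetric] mult_minus_left expab)
    moreover have "exp (a b * t) * (exp (- t * a b) * w a (insert b A) b) = w a (insert b A) b"
      by (simp only: mult.assoc[symmetric] mult_minus_left expab) simp
    ultimately show ?thesis by simp
  qed
  finally show ?thesis .
qed


lemma exp_split: "exp ((x - y) * t) = exp (x*t) * exp (- (t * (y::real)))"
proof -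
  have "x * t + - (t * y) = (x - y) * t" by (simp add: algebra_simps)
  thus ?thesis by (simp only: exp_add[symmetric])
qed

lemma G_deriv:
  assumes "finite A" "b \<notin> A" "inj_on a (insert b A)"
  shows "((\<lambda>t. exp (a b * t) * FF a (insert b A) t) has_real_derivative exp (a b * t) * FF a A t) (at t)"
proof -
  have ne: "\<And>j. j \<in> A \<Longrightarrow> a b - a j \<noteq> 0" using assms by (auto simp: inj_on_def)
  have "((\<lambda>t. (\<Sum>j\<in>A. exp ((a b - a j) * t) * (w a A j / (a b - a j))) + w a (insert b A) b)
     has_real_derivative (\<Sum>j\<in>A. exp ((a b - a j) * t) * (a b - a j) * (w a A j / (a b - a j))) + 0) (at t)"
    by (intro derivative_eq_intros refl) auto
  moreover have "(\<Sum>j\<in>A. exp ((a b - a j) * t) * (a b - a j) * (w a A j / (a b - a j))) = exp (a b * t) * FF a A t"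
    unfolding FF_def sum_distrib_left
  proof (rule sum.cong)
    fix j assume "j \<in> A"
    then show "exp ((a b - a j) * t) * (a b - a j) * (w a A j / (a b - a j)) = exp (a b * t) * (exp (- t * a j) * w a A j)"
      using ne[of j] unfolding exp_split by (simp add: divide_simps)
  qed simp
  ultimately show ?thesis using G_eq[OF assms] by simp
qed

lemma FF_nonneg:
  assumes "finite A" "A \<noteq> {}"
  shows "inj_on a A \<Longrightarrow> x \<ge> 0 \<Longrightarrow> FF a A x \<ge> 0"
  using assms
proof (induction A arbitrary: x rule: finite_ne_induct)
  case (singleton y)
  then show ?case by (simp add: FF_def w_def)
next
  case (insert b A)
  have inj: "inj_on a A" using insert by auto
  have "exp (a b * 0) * FF a (insert b A) 0 \<le> exp (a b * x) * FF a (insert b A) x"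
  proof (rule DERIV_nonneg_imp_nondecreasing[OF insert.prems(2)])
    fix t :: real assume "0 \<le> t" "t \<le> x"
    then show "\<exists>y. ((\<lambda>t. exp (a b * t) * FF a (insert b A) t) has_real_derivative y) (at t) \<and> 0 \<le> y"
      using G_deriv[of A b a t] insert inj by (intro exI[of _ "exp (a b * t) * FF a A t"]) auto
  qed
  hence "0 \<le> exp (a b * x) * FF a (insert b A) x" using FF_zero[of A b a] insert by simp
  then show ?case by (simp add: zero_le_mult_iff)
qed

lemma EE_ins:
  assumes "finite A" "b \<notin> A" "inj_on a (insert b A)"
  shows "EE a (insert b A) x = EE a A x + (\<Prod>m\<in>A. a m) * FF a (insert b A) x"
proof -
  have ne: "\<And>j. j \<in> A \<Longrightarrow> a b - a j \<noteq> 0" using assms by (auto simp: inj_on_def)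
  have bA: "insert b A - {b} = A" using assms by auto
  have "EE a (insert b A) x = (\<Sum>j\<in>A. exp (- x * a j) * (\<Prod>m\<in>insert b A-{j}. a m) * w a (insert b A) j)
      + exp (- x * a b) * (\<Prod>m\<in>A. a m) * w a (insert b A) b"
    using assms by (simp add: EE_def bA)
  also have "(\<Sum>j\<in>A. exp (- x * a j) * (\<Prod>m\<in>insert b A-{j}. a m) * w a (insert b A) j)
     = (\<Sum>j\<in>A. exp (- x * a j) * (\<Prod>m\<in>A-{j}. a m) * w a A j + exp (- x * a j) * (\<Prod>m\<in>A. a m) * (w a A j / (a b - a j)))"
  proof (rule sum.cong)
    fix j assume j: "j \<in> A"
    have pj: "(\<Prod>m\<in>A. a m) = a j * (\<Prod>m\<in>A-{j}. a m)"
      using j assms(1) by (simp add: prod.remove)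
    show "exp (- x * a j) * (\<Prod>m\<in>insert b A-{j}. a m) * w a (insert b A) j =
          exp (- x * a j) * (\<Prod>m\<in>A-{j}. a m) * w a A j + exp (- x * a j) * (\<Prod>m\<in>A. a m) * (w a A j / (a b - a j))"
      unfolding pj prod_ins_old[OF assms(1,2) j] w_ins_old[OF assms(1,2) j]
      using ne[OF j] by (simp add: divide_simps) (simp add: algebra_simps)
  qed simp
  also have "\<dots> = EE a A x + (\<Sum>j\<in>A. exp (- x * a j) * (\<Prod>m\<in>A. a m) * (w a A j / (a b - a j)))"
    by (simp add: EE_def sum.distrib)
  finally have 1: "EE a (insert b A) x = EE a A x + (\<Sum>j\<in>A. exp (- x * a j) * (\<Prod>m\<in>A. a m) * (w a A j / (a b - a j)))
      + exp (- x * a b) * (\<Prod>m\<in>A. a m) * w a (insert b A) b" .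
  have 2: "(\<Prod>m\<in>A. a m) * FF a (insert b A) x = (\<Sum>j\<in>A. exp (- x * a j) * (\<Prod>m\<in>A. a m) * (w a A j / (a b - a j)))
      + exp (- x * a b) * (\<Prod>m\<in>A. a m) * w a (insert b A) b"
  proof -
    have "FF a (insert b A) x = (\<Sum>j\<in>A. exp (- x * a j) * (w a A j / (a b - a j))) + exp (- x * a b) * w a (insert b A) b"
      using assms by (simp add: FF_def w_ins_old)
    thus ?thesis by (simp add: sum_distrib_left distrib_left mult_ac)
  qed
  show ?thesis using 1 2 by simp
qed

lemma EE_single: "EE a {j} x = exp (- x * a j)"
  by (simp add: EE_def w_def)

lemma EE_zero:
  assumes "finite A" "A \<noteq> {}"
  shows "inj_on a A \<Longrightarrow> EE a A 0 = 1"
  using assms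
proof (induction A rule: finite_ne_induct)
  case (singleton y)
  then show ?case by (simp add: EE_single)
next
  case (insert b A)
  then show ?case using EE_ins[of A b a 0] FF_zero[of A b a] by auto
qed

lemma EE_nonneg:
  assumes "finite A" "A \<noteq> {}"
  shows "inj_on a A \<Longrightarrow> (\<forall>m\<in>A. a m \<ge> 0) \<Longrightarrow> x \<ge> 0 \<Longrightarrow> EE a A x \<ge> 0"
  using assms
proof (induction A rule: finite_ne_induct)
  case (singleton y)
  then show ?case by (simp add: EE_single)
next
  case (insert b A)
  have "FF a (insert b A) x \<ge> 0" using FF_nonneg[of "insert b A" a x] insert by auto
  moreover have "(\<Prod>m\<in>A. a m) \<ge> 0" using insert by (simp add: prod_nonneg)
  ultimately show ?case using EE_ins[of A b a x] insert by auto
qed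

lemma EE_deriv:
  assumes "finite A"
  shows "(EE a A has_real_derivative - (\<Prod>m\<in>A. a m) * FF a A t) (at t)"
proof -
  have "((\<lambda>x. \<Sum>j\<in>A. exp (- x * a j) * (\<Prod>m\<in>A-{j}. a m) * w a A j) has_real_derivative (\<Sum>j\<in>A. exp (- t * a j) * (- a j) * (\<Prod>m\<in>A-{j}. a m) * w a A j)) (at t)"
    by (rule DERIV_sum, intro derivative_eq_intros refl) auto
  moreover have "(\<Sum>j\<in>A. exp (- t * a j) * (- a j) * (\<Prod>m\<in>A-{j}. a m) * w a A j) = (\<Sum>j\<in>A. - (\<Prod>m\<in>A. a m) * (exp (- t * a j) * w a A j))"
  proof (rule sum.cong)
    fix j assume j: "j \<in> A"
    have pj: "(\<Prod>m\<in>A. a m) = a j * (\<Prod>m\<in>A-{j}. a m)"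
      using j assms(1) by (simp add: prod.remove)
    show "exp (- t * a j) * (- a j) * (\<Prod>m\<in>A-{j}. a m) * w a A j = - (\<Prod>m\<in>A. a m) * (exp (- t * a j) * w a A j)"
      unfolding pj by (simp add: mult_ac)
  qed simp
  moreover have "(\<Sum>j\<in>A. - (\<Prod>m\<in>A. a m) * (exp (- t * a j) * w a A j)) = - (\<Prod>m\<in>A. a m) * FF a A t"
    by (simp add: FF_def sum_distrib_left)
  ultimately show ?thesis unfolding EE_def[abs_def] by simp
qed

lemma EE_le1:
  assumes "finite A" "A \<noteq> {}" "inj_on a A" "\<forall>m\<in>A. a m \<ge> 0" "x \<ge> 0"
  shows "EE a A x \<le> 1"
proof -
  have "EE a A x \<le> EE a A 0"
  proof (rule DERIV_nonpos_imp_nonincreasing[OF assms(5)])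
    fix t :: real assume "0 \<le> t" "t \<le> x"
    moreover have "FF a A t \<ge> 0" using FF_nonneg[of A a t] assms \<open>0 \<le> t\<close> by auto
    moreover have "(\<Prod>m\<in>A. a m) \<ge> 0" using assms by (simp add: prod_nonneg)
    ultimately show "\<exists>y. (EE a A has_real_derivative y) (at t) \<and> y \<le> 0"
      using EE_deriv[OF assms(1), of a t] by (intro exI[of _ "- (\<Prod>m\<in>A. a m) * FF a A t"]) auto
  qed
  thus ?thesis using EE_zero[OF assms(1,2,3)] by simp
qed

lemma tele: "(\<Sum>i=1..n. (g (i-1) - g i :: real)) = g 0 - g (n::nat)" for g :: "nat \<Rightarrow> real"
  by (induction n) auto

lemma strict_dec_aux:
  assumes "\<And>i. Suc i < N \<Longrightarrow> f (Suc i) < (f i :: real)"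
  shows "i < j \<Longrightarrow> j < N \<Longrightarrow> f j < f i"
proof (induction j)
  case 0 then show ?case by simp
next
  case (Suc j)
  show ?case
  proof (cases "i = j")
    case True then show ?thesis using assms Suc by simp
  next
    case False
    hence "f j < f i" using Suc by simp
    moreover have "f (Suc j) < f j" using assms Suc by simp
    ultimately show ?thesis by simp
  qed
qed

theorem mainTheorem2:
  fixes N :: nat and \<beta> :: "nat \<Rightarrow> real" and l :: real
  assumes "admissible N \<beta>" and "l < 0"
  shows "(\<forall>k\<le>N. 0 \<le> p N \<beta> k l \<and> p N \<beta> k l \<le> 1) \<and> (\<Sum>k=0..N. p N \<beta> k l) = 1"
proof (cases "N = 0")
  case True
  then show ?thesis by (simp add: p_def)
next
  case False
  then obtain n where Nn: "N = Suc n" by (cases N) auto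
  have dec: "\<And>i. i < N \<Longrightarrow> \<beta> (Suc i) \<le> \<beta> i" and bN: "\<beta> N > 0" and s1: "(\<Sum>i=0..N. \<beta> i) = 1"
    using assms(1) by (auto simp: admissible_def)
  have bge: "\<And>d. d \<le> N \<Longrightarrow> \<beta> (N - d) \<ge> \<beta> N"
  proof -
    fix d show "d \<le> N \<Longrightarrow> \<beta> (N - d) \<ge> \<beta> N"
    proof (induction d)
      case 0 then show ?case by simp
    next
      case (Suc d)
      have "\<beta> (Suc (N - Suc d)) \<le> \<beta> (N - Suc d)" using dec[of "N - Suc d"] Suc by simp
      moreover have "Suc (N - Suc d) = N - d" using Suc by simp
      ultimately show ?case using Suc by simp
    qed
  qed
  have bpos: "\<And>i. i \<le> N \<Longrightarrow> \<beta> i > 0"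
  proof -
    fix i assume "i \<le> N"
    hence "\<beta> (N - (N - i)) \<ge> \<beta> N" using bge[of "N - i"] by simp
    thus "\<beta> i > 0" using bN \<open>i \<le> N\<close> by simp
  qed
  define S where "S i = (\<Sum>j=0..i. \<beta> j)" for i
  have Spos: "\<And>i. i \<le> N \<Longrightarrow> S i > 0"
  proof -
    fix i assume i: "i \<le> N"
    have "S i = \<beta> 0 + (\<Sum>j=Suc 0..i. \<beta> j)" unfolding S_def by (simp add: sum.atLeast_Suc_atMost)
    moreover have "(\<Sum>j=Suc 0..i. \<beta> j) \<ge> 0" proof (intro sum_nonneg)
      fix y assume "y \<in> {Suc 0..i}"
      hence "y \<le> N" using i by auto
      thus "0 \<le> \<beta> y" using bpos[of y] by simp
    qed
    ultimately show "S i > 0" using bpos[of 0] by simp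
  qed
  have muS: "\<And>i. mu \<beta> i = \<beta> (Suc i) / S i" by (simp add: mu_def S_def)
  have mupos: "\<And>i. i < N \<Longrightarrow> mu \<beta> i > 0" using bpos Spos muS by simp
  have mudec: "\<And>i. Suc i < N \<Longrightarrow> mu \<beta> (Suc i) < mu \<beta> i"
  proof -
    fix i assume i: "Suc i < N"
    have SS: "S (Suc i) = S i + \<beta> (Suc i)" by (simp add: S_def)
    have "mu \<beta> (Suc i) = \<beta> (Suc (Suc i)) / S (Suc i)" by (rule muS)
    also have "\<dots> \<le> \<beta> (Suc i) / S (Suc i)" using dec[of "Suc i"] i Spos[of "Suc i"]
      by (intro divide_right_mono) auto
    also have "\<dots> < \<beta> (Suc i) / S i" using Spos[of i] bpos[of "Suc i"] i SS
      by (intro divide_strict_left_mono) auto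
    finally show "mu \<beta> (Suc i) < mu \<beta> i" using muS by simp
  qed
  define a where "a m = 1 / mu \<beta> m" for m
  define x where "x = l\<^sup>2 / 2"
  have x0: "x \<ge> 0" by (simp add: x_def)
  have apos: "\<And>m. m < N \<Longrightarrow> a m > 0" using mupos by (simp add: a_def)
  have ainc: "\<And>i j. i < j \<Longrightarrow> j < N \<Longrightarrow> a i < a j"
  proof -
    fix i j assume ij: "i < j" "j < N"
    have "mu \<beta> j < mu \<beta> i" by (rule strict_dec_aux[of N "mu \<beta>", OF mudec ij])
    thus "a i < a j" using mupos ij by (simp add: a_def divide_strict_left_mono)
  qed
  have inj: "\<And>k. inj_on a {k..N-1}"
  proof -
    fix k show "inj_on a {k..N-1}"
    proof (rule inj_onI)
      fix i j assume "i \<in> {k..N-1}" "j \<in> {k..N-1}" "a i = a j"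
      moreover have "i < N" "j < N" using \<open>i \<in> {k..N-1}\<close> \<open>j \<in> {k..N-1}\<close> Nn by auto
      ultimately show "i = j"
      proof (cases i j rule: linorder_cases)
        case less then show ?thesis using ainc[of i j] \<open>j < N\<close> \<open>a i = a j\<close> by simp
      next
        case greater then show ?thesis using ainc[of j i] \<open>i < N\<close> \<open>a i = a j\<close> by simp
      qed
    qed
  qed
  have anon: "\<And>k. \<forall>m\<in>{k..N-1}. a m \<ge> 0"
  proof (intro allI ballI)
    fix k m assume "m \<in> {k..N-1}"
    hence "m < N" using Nn by auto
    thus "a m \<ge> 0" using apos[of m] by simp
  qed
  define g where "g i = EE a {i..N-1} x" for i
  have g01: "\<And>i. i \<le> N - 1 \<Longrightarrow> 0 \<le> g i \<and> g i \<le> 1"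
  proof -
    fix i assume "i \<le> N - 1"
    hence ne: "{i..N-1} \<noteq> {}" by simp
    show "0 \<le> g i \<and> g i \<le> 1" unfolding g_def
      using EE_nonneg[OF finite_atLeastAtMost ne inj anon x0] EE_le1[OF finite_atLeastAtMost ne inj anon x0] by simp
  qed
  have pmid_FF: "\<And>k. 1 \<le> k \<Longrightarrow> k < N \<Longrightarrow> p_mid N \<beta> k l = (\<Prod>m\<in>{k..N-1}. a m) * FF a {k-1..N-1} x"
  proof -
    fix k
    have e: "\<And>j. exp (- l\<^sup>2 / (2 * mu \<beta> j)) = exp (- x * a j)"
    proof -
      fix j
      have "- l\<^sup>2 / (2 * mu \<beta> j) = - x * a j"
        by (cases "mu \<beta> j = 0") (simp_all add: x_def a_def)
      thus "exp (- l\<^sup>2 / (2 * mu \<beta> j)) = exp (- x * a j)" by simp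
    qed
    show "p_mid N \<beta> k l = (\<Prod>m\<in>{k..N-1}. a m) * FF a {k-1..N-1} x"
      unfolding p_mid_def FF_def w_def e a_def ..
  qed
  have pmid_g: "\<And>k. 1 \<le> k \<Longrightarrow> k < N \<Longrightarrow> p_mid N \<beta> k l = g (k-1) - g k"
  proof -
    fix k assume k: "1 \<le> k" "k < N"
    have ins: "{k-1..N-1} = insert (k-1) {k..N-1}" using k by auto
    have "EE a (insert (k-1) {k..N-1}) x = EE a {k..N-1} x + (\<Prod>m\<in>{k..N-1}. a m) * FF a (insert (k-1) {k..N-1}) x"
    proof (rule EE_ins)
      show "k - 1 \<notin> {k..N-1}" using k by auto
      show "inj_on a (insert (k-1) {k..N-1})" using inj[of "k-1"] unfolding ins .
    qed simp
    thus "p_mid N \<beta> k l = g (k-1) - g k" using pmid_FF[OF k] ins by (simp add: g_def)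
  qed
  have pmid_nonneg: "\<And>k. 1 \<le> k \<Longrightarrow> k < N \<Longrightarrow> p_mid N \<beta> k l \<ge> 0"
  proof -
    fix k assume k: "1 \<le> k" "k < N"
    have "FF a {k-1..N-1} x \<ge> 0" using FF_nonneg[of "{k-1..N-1}" a x] inj x0 k by auto
    moreover have "(\<Prod>m\<in>{k..N-1}. a m) \<ge> 0" using anon[of k] by (intro prod_nonneg) auto
    ultimately show "p_mid N \<beta> k l \<ge> 0" using pmid_FF[OF k] by simp
  qed
  have ptop: "p_top N \<beta> l = g (N-1)"
  proof -
    have SN: "S (N-1) = 1 - \<beta> N" using s1 Nn by (simp add: S_def)
    have aN: "a (N-1) = (1 - \<beta> N) / \<beta> N" using Nn SN by (simp add: a_def muS)
    have "- ((1 - \<beta> N) * l\<^sup>2) / (2 * \<beta> N) = - (l\<^sup>2 / 2) * ((1 - \<beta> N) / \<beta> N)"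
      using bN by (simp add: field_simps)
    hence "- ((1 - \<beta> N) * l\<^sup>2) / (2 * \<beta> N) = - x * a (N-1)" unfolding aN x_def .
    thus ?thesis by (simp add: p_top_def g_def EE_single)
  qed
  have sum_mid: "(\<Sum>i=1..N-1. p_mid N \<beta> i l) = g 0 - g (N-1)"
  proof -
    have "(\<Sum>i=1..N-1. p_mid N \<beta> i l) = (\<Sum>i=1..N-1. g (i-1) - g i)"
    proof (rule sum.cong)
      fix i assume "i \<in> {1..N-1}"
      hence "1 \<le> i" "i < N" using Nn by auto
      thus "p_mid N \<beta> i l = g (i-1) - g i" by (rule pmid_g)
    qed simp
    thus ?thesis using tele[of g "N-1"] by simp
  qed
  have p0: "p N \<beta> 0 l = 1 - g 0" using False sum_mid ptop by (simp add: p_def)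
  have bounds: "\<forall>k\<le>N. 0 \<le> p N \<beta> k l \<and> p N \<beta> k l \<le> 1"
  proof (intro allI impI)
    fix k assume k: "k \<le> N"
    show "0 \<le> p N \<beta> k l \<and> p N \<beta> k l \<le> 1"
    proof (cases "k = 0")
      case True then show ?thesis using p0 g01[of 0] by simp
    next
      case k0: False
      show ?thesis
      proof (cases "k = N")
        case True then show ?thesis using ptop g01[of "N-1"] False by (simp add: p_def)
      next
        case kN: False
        hence k1: "1 \<le> k" "k < N" using k k0 by auto
        have "p N \<beta> k l = p_mid N \<beta> k l" using False kN k1 by (simp add: p_def)
        moreover have "g (k-1) \<le> 1" "g k \<ge> 0" using g01[of "k-1"] g01[of k] k1 by auto
        ultimately show ?thesis using pmid_nonneg[OF k1] pmid_g[OF k1] by simp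
      qed
    qed
  qed
  have "(\<Sum>k=0..N. p N \<beta> k l) = p N \<beta> 0 l + (\<Sum>k=1..n. p N \<beta> k l) + p N \<beta> N l"
    using Nn by (simp add: sum.atLeast_Suc_atMost)
  also have "(\<Sum>k=1..n. p N \<beta> k l) = (\<Sum>k=1..N-1. p_mid N \<beta> k l)"
    using Nn by (intro sum.cong) (auto simp: p_def)
  finally have "(\<Sum>k=0..N. p N \<beta> k l) = 1"
    using False sum_mid ptop p0 by (simp add: p_def)
  with bounds show ?thesis by simp
qed

end
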